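(* For every $\zeta\in\mathbb C$ with $|\zeta|<1$, the series $\sum_{n=0}^\infty\zeta^nL_0^n(J)$ converges absolutely with respect to the entrywise $\ell_1$-norm $\|C\|=\sum_{x,y}|C(x,y)|$, and \[ \sum_{n=0}^\infty\zeta^nL_0^n(J)=\frac1{1-\zeta}J+\frac{2\zeta(I-Q)\,[N-\zeta(N-2+2Q)]^{-1}}{N(1-\zeta)^2\,\mathrm{tr}\big((N-\zeta(N-2+2Q))^{-1}\big)}. \]
   Context: $E$ is a finite set with $N=\#E>8$ elements, listed in a fixed order; $\mathsf M_E$ is the space of complex $N\times N$ matrices indexed by $E\times E$. $Q$ is an irreducible stochastic matrix on $E$ with $Q(x,y)=Q(y,x)$ for all $x,y$ and $\mathrm{tr}(Q)=0$. $I$ is the identity, $J$ the matrix with all entries $1/N$, and $[N-\zeta(N-2+2Q)]^{-1}$ the inverse of $NI-\zeta((N-2)I+2Q)$. The linear operator $L_0:\mathsf M_E\to\mathsf M_E$ is $L_0(C)=\frac{N-2}NC+\frac1N(CQ+QC)-\frac{2\,\mathrm{tr}(C)}{N^2}Q+\frac{2\,\mathrm{tr}(C)}{N^2}I$, and $L_0^n$ is its $n$-fold composition ($L_0^0=$ identity). *)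

theory Defs
  imports "HOL-Analysis.Analysis"
begin

text \<open>Matrices indexed by E x E are modelled as complex^'e^'e for a finite type 'e (the set E).\<close>

definition cmat :: "real^'e^'e \<Rightarrow> complex^'e^'e" where
  "cmat Q = (\<chi> i j. complex_of_real (Q$i$j))"

definition mpow :: "'a::semiring_1^'e^'e \<Rightarrow> nat \<Rightarrow> 'a^'e^'e" where
  "mpow A n = (((**) A) ^^ n) (mat 1)"

definition stochastic :: "real^'e^'e \<Rightarrow> bool" where
  "stochastic Q \<longleftrightarrow> (\<forall>x y. Q$x$y \<ge> 0) \<and> (\<forall>x. (\<Sum>y\<in>UNIV. Q$x$y) = 1)"

definition irreducible_mat :: "real^'e^'e \<Rightarrow> bool" where
  "irreducible_mat Q \<longleftrightarrow> (\<forall>x y. \<exists>n. mpow Q n $ x $ y > 0)"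

definition Jmat :: "complex^'e^'e" where
  "Jmat = (\<chi> i j. 1 / of_nat CARD('e))"

definition l1norm :: "complex^'e^'e \<Rightarrow> real" where
  "l1norm C = (\<Sum>x\<in>UNIV. \<Sum>y\<in>UNIV. cmod (C$x$y))"

definition msc :: "complex \<Rightarrow> complex^'e^'e \<Rightarrow> complex^'e^'e" (infixr "*m" 75) where
  "c *m A = (\<chi> i j. c * A$i$j)"

definition L0 :: "real^'e^'e \<Rightarrow> complex^'e^'e \<Rightarrow> complex^'e^'e" where
  "L0 Q C = (let N = of_nat CARD('e) :: complex; Qc = cmat Q in
     ((N - 2) / N) *m C + (1 / N) *m (C ** Qc + Qc ** C)
     - (2 * trace C / N^2) *m Qc + (2 * trace C / N^2) *m mat 1)"

end

theory Submission
  imports Defs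
begin


lemma matrix_sub_ldistrib: "(A::'a::ring_1^'n^'m) ** (B - C) = A ** B - A ** C"
  by (vector matrix_matrix_mult_def sum_subtractf[symmetric] field_simps)
lemma matrix_sub_rdistrib: "((A::'a::ring_1^'n^'m) - B) ** C = A ** C - B ** C"
  by (vector matrix_matrix_mult_def sum_subtractf[symmetric] field_simps)
lemma matrix_add_rdistrib: "((A::'a::semiring_1^'n^'m) + B) ** C = A ** C + B ** C"
  by (vector matrix_matrix_mult_def sum.distrib[symmetric] field_simps)
lemma trace_scaleR: "trace (c *\<^sub>R (A::real^'n^'n)) = c * trace A"
  by (simp add: trace_def sum_distrib_left)
lemma trace_transpose: "trace (transpose A) = trace A"
  by (simp add: trace_def transpose_def)

lemma msc_comp[simp]: "(c *m A) $ i $ j = c * A $ i $ j"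
  by (simp add: msc_def)
lemma msc_mult_left: "(c *m A) ** B = c *m (A ** B)"
  by (simp add: vec_eq_iff matrix_matrix_mult_def sum_distrib_left mult.assoc)
lemma msc_mult_right: "A ** (c *m B) = c *m (A ** B)"
  by (simp add: vec_eq_iff matrix_matrix_mult_def sum_distrib_left mult_ac)
lemma msc_add: "c *m (A + B) = c *m A + c *m B"
  by (simp add: vec_eq_iff algebra_simps)
lemma msc_diff: "c *m (A - B) = c *m A - c *m B"
  by (simp add: vec_eq_iff algebra_simps)
lemma msc_add_left: "(a + b) *m A = a *m A + b *m A"
  by (simp add: vec_eq_iff algebra_simps)
lemma msc_msc: "a *m (b *m A) = (a * b) *m A"
  by (simp add: vec_eq_iff algebra_simps)
lemma msc_one[simp]: "1 *m A = A"
  by (simp add: vec_eq_iff)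
lemma trace_msc: "trace (c *m A) = c * trace A"
  by (simp add: trace_def sum_distrib_left)

lemma cmat_comp[simp]: "cmat A $ i $ j = complex_of_real (A $ i $ j)"
  by (simp add: cmat_def)
lemma cmat_add: "cmat (A + B) = cmat A + cmat B"
  by (simp add: vec_eq_iff)
lemma cmat_diff: "cmat (A - B) = cmat A - cmat B"
  by (simp add: vec_eq_iff)
lemma cmat_mult: "cmat (A ** B) = cmat A ** cmat B"
  by (simp add: vec_eq_iff matrix_matrix_mult_def)
lemma cmat_scaleR: "cmat (c *\<^sub>R A) = complex_of_real c *m cmat A"
  by (simp add: vec_eq_iff)
lemma cmat_one: "cmat (mat 1) = mat 1"
  by (simp add: vec_eq_iff mat_def)
lemma trace_cmat: "trace (cmat A) = complex_of_real (trace A)"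
  by (simp add: trace_def)



definition Jr :: "real^'e^'e" where "Jr = (\<chi> i j. 1 / real CARD('e))"
definition Pm :: "real^'e^'e \<Rightarrow> real^'e^'e" where
  "Pm Q = (2 / real CARD('e)) *\<^sub>R (mat 1 - Q)"
definition Lr :: "real^'e^'e \<Rightarrow> real^'e^'e \<Rightarrow> real^'e^'e" where
  "Lr Q C = (let N = real CARD('e) in
     ((N - 2) / N) *\<^sub>R C + (1 / N) *\<^sub>R (C ** Q + Q ** C)
     - (2 * trace C / N^2) *\<^sub>R Q + (2 * trace C / N^2) *\<^sub>R mat 1)"

locale qs =
  fixes Q :: "real^'e^'e"
  assumes nonneg: "\<And>x y. Q$x$y \<ge> 0" and rows: "\<And>x. (\<Sum>y\<in>UNIV. Q$x$y) = 1"
    and sym: "\<And>x y. Q$x$y = Q$y$x" and trQ: "trace Q = 0" and card: "CARD('e) > 2"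
begin

lemma cols: "(\<Sum>x\<in>UNIV. Q$x$y) = 1"
  using rows[of y] by (simp add: sym)

lemma QT: "transpose Q = Q"
  by (simp add: transpose_def vec_eq_iff sym)

lemma Npos: "real CARD('e) > 0" using card by simp

lemma QJ: "Q ** Jr = Jr"
  by (simp add: vec_eq_iff matrix_matrix_mult_def Jr_def flip: sum_divide_distrib) (simp add: rows)
lemma JQ: "Jr ** Q = Jr"
  by (simp add: vec_eq_iff matrix_matrix_mult_def Jr_def flip: sum_divide_distrib) (simp add: cols)
lemma JJ: "Jr ** Jr = (Jr :: real^'e^'e)"
  using Npos by (simp add: vec_eq_iff matrix_matrix_mult_def Jr_def power2_eq_square)
lemma PJ: "Pm Q ** Jr = 0"
  by (simp add: Pm_def QJ matrix_sub_rdistrib flip: scalar_matrix_assoc)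
lemma JP: "Jr ** Pm Q = 0"
  by (simp add: Pm_def matrix_sub_ldistrib matrix_scalar_ac flip: scalar_matrix_assoc) (simp add: JQ)
lemma PQ: "Pm Q ** Q = Q ** Pm Q"
  by (simp add: Pm_def matrix_sub_ldistrib matrix_sub_rdistrib matrix_scalar_ac scaleR_diff_right flip: scalar_matrix_assoc)
lemma trP: "trace (Pm Q) = 2"
  using Npos by (simp add: Pm_def trace_scaleR trace_sub trQ trace_I)
lemma PT: "transpose (Pm Q) = Pm Q"
  by (simp add: Pm_def vec_eq_iff transpose_def mat_def sym)
lemma JT: "transpose Jr = Jr"
  by (simp add: Jr_def vec_eq_iff transpose_def)

lemma Lr_step:
  assumes EQ: "E ** Q = Q ** E"
  shows "Lr Q (mat 1 + E) = mat 1 + E - Pm Q ** E + (trace E / real CARD('e)) *\<^sub>R Pm Q"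
proof -
  have tr: "trace (mat 1 + E) = real CARD('e) + trace E" by (simp add: trace_add trace_I)
  show ?thesis
    unfolding Lr_def Let_def Pm_def tr
    using Npos
    by (simp add: EQ matrix_add_ldistrib matrix_add_rdistrib matrix_sub_rdistrib
        flip: scalar_matrix_assoc)
       (simp add: vec_eq_iff field_simps power2_eq_square)
qed

end


lemma transpose_add: "transpose (A + B) = transpose A + transpose (B::'a::semiring_1^'n^'n)"
  by (simp add: vec_eq_iff transpose_def)
lemma transpose_diff: "transpose (A - B) = transpose A - transpose (B::'a::ring_1^'n^'n)"
  by (simp add: vec_eq_iff transpose_def)
lemma transpose_scaleR: "transpose (c *\<^sub>R A) = c *\<^sub>R transpose (A::real^'n^'n)"
  by (simp add: vec_eq_iff transpose_def)

lemma inv_props: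
  assumes "invertible (A::'a::semiring_1^'n^'n)"
  shows "A ** matrix_inv A = mat 1 \<and> matrix_inv A ** A = mat 1"
  using assms unfolding matrix_inv_def invertible_def by (rule someI_ex)

lemma mpow_Suc: "mpow A (Suc n) = A ** mpow A n"
  by (simp add: mpow_def)
lemma mpow_0: "mpow A 0 = mat 1"
  by (simp add: mpow_def)

primrec Ys :: "real^'e^'e \<Rightarrow> nat \<Rightarrow> real^'e^'e" where
  "Ys Q 0 = Jr - matrix_inv (Pm Q + Jr)"
| "Ys Q (Suc n) = Ys Q n - Pm Q ** Ys Q n + (trace (Pm Q ** Ys Q n) / real CARD('e)) *\<^sub>R mat 1"

context qs begin

lemma path_const:
  assumes edge: "\<And>i j. Q$i$j > 0 \<Longrightarrow> x i = (x j :: real)"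
  shows "mpow Q n $ a $ b > 0 \<Longrightarrow> x a = x b"
proof (induction n arbitrary: a)
  case 0
  then show ?case by (simp add: mpow_0 mat_def split: if_splits)
next
  case (Suc n)
  have "(\<Sum>k\<in>UNIV. Q$a$k * mpow Q n $ k $ b) > 0"
    using Suc.prems by (simp add: mpow_Suc matrix_matrix_mult_def)
  then obtain k where k: "Q$a$k * mpow Q n $ k $ b > 0"
    by (metis (no_types, lifting) not_le sum_nonpos)
  have q: "Q$a$k > 0" using k nonneg[of a k]
    by (metis less_eq_real_def mult_zero_left order_less_irrefl)
  then have "mpow Q n $ k $ b > 0" using k zero_less_mult_pos by blast
  then show ?case using Suc.IH edge[OF q] by simp
qed

lemma ker:
  assumes irr: "irreducible_mat Q" and x: "(Pm Q + Jr) *v x = 0"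
  shows "x = 0"
proof -
  define N where "N = real CARD('e)"
  have Np: "N > 0" using Npos N_def by simp
  define h where "h i = (\<Sum>j\<in>UNIV. Q$i$j * x$j)" for i
  define s where "s = (\<Sum>j\<in>UNIV. x$j)"
  have ci: "2 * (x$i - h i) + s = 0" for i
  proof -
    have "((Pm Q + Jr) *v x) $ i = 0" using x by simp
    then have "(\<Sum>j\<in>UNIV. (2 / N * ((if i = j then 1 else 0) - Q$i$j) + 1/N) * x$j) = 0"
      by (simp add: matrix_vector_mult_def Pm_def Jr_def mat_def N_def)
    then have "(\<Sum>j\<in>UNIV. (2 / N) * ((if i = j then 1 else 0) * x$j) - (2 / N) * (Q$i$j * x$j) + (1/N) * x$j) = 0"
      by (simp add: algebra_simps)
    moreover have "(\<Sum>j\<in>UNIV. (if i = j then 1 else 0) * x$j) = x$i"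
      by (simp add: if_distrib[of "\<lambda>y. y * x$j" for j] cong: if_cong)
    moreover have "(\<Sum>j\<in>UNIV. (2 / N) * ((if i = j then 1 else 0) * x$j) - (2 / N) * (Q$i$j * x$j) + (1/N) * x$j)
       = (2/N) * (\<Sum>j\<in>UNIV. (if i = j then 1 else 0) * x$j) - (2/N) * h i + (1/N) * s"
      by (simp only: sum.distrib sum_subtractf sum_distrib_left h_def s_def)
    ultimately have "(2/N) * (x$i - h i) + (1/N) * s = 0"
      by (simp add: right_diff_distrib)
    then show ?thesis using Np by (simp add: field_simps)
  qed
  have sh: "(\<Sum>i\<in>UNIV. h i) = s"
    unfolding h_def s_def by (simp add: sum.swap[of _ UNIV] flip: sum_distrib_right) (simp add: cols)
  have "(\<Sum>i\<in>UNIV. 2 * (x$i - h i) + s) = 0" using ci by simp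
  then have "2 * (s - s) + N * s = 0"
    by (simp add: sum.distrib sum_subtractf sh N_def flip: sum_distrib_left s_def)
  then have s0: "s = 0" using Np by simp
  have hx: "h i = x$i" for i using ci[of i] s0 by simp
  have quad: "(\<Sum>i\<in>UNIV. \<Sum>j\<in>UNIV. Q$i$j * (x$i - x$j)^2) = 0"
  proof -
    have "(\<Sum>i\<in>UNIV. \<Sum>j\<in>UNIV. Q$i$j * (x$i - x$j)^2)
        = (\<Sum>i\<in>UNIV. \<Sum>j\<in>UNIV. Q$i$j * (x$i)^2) - 2 * (\<Sum>i\<in>UNIV. x$i * h i)
          + (\<Sum>i\<in>UNIV. \<Sum>j\<in>UNIV. Q$i$j * (x$j)^2)"
      by (simp add: h_def power2_eq_square algebra_simps sum.distrib sum_subtractf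
           sum_distrib_left)
    also have "(\<Sum>i\<in>UNIV. \<Sum>j\<in>UNIV. Q$i$j * (x$i)^2) = (\<Sum>i\<in>UNIV. (x$i)^2)"
      by (simp add: rows flip: sum_distrib_right)
    also have "(\<Sum>i\<in>UNIV. \<Sum>j\<in>UNIV. Q$i$j * (x$j)^2) = (\<Sum>j\<in>UNIV. (x$j)^2)"
      by (subst sum.swap) (simp add: cols flip: sum_distrib_right)
    also have "(\<Sum>i\<in>UNIV. x$i * h i) = (\<Sum>i\<in>UNIV. (x$i)^2)"
      by (simp add: hx power2_eq_square)
    finally show ?thesis by simp
  qed
  have zero: "Q$i$j * (x$i - x$j)^2 = 0" for i j
  proof -
    have "\<forall>i\<in>UNIV. (\<Sum>j\<in>UNIV. Q$i$j * (x$i - x$j)^2) = 0"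
      using quad by (subst (asm) sum_nonneg_eq_0_iff) (auto intro!: sum_nonneg simp: nonneg)
    then have "(\<Sum>j\<in>UNIV. Q$i$j * (x$i - x$j)^2) = 0" by simp
    then show ?thesis by (subst (asm) sum_nonneg_eq_0_iff) (auto simp: nonneg)
  qed
  have edge: "Q$i$j > 0 \<Longrightarrow> x$i = x$j" for i j using zero[of i j] by simp
  have const: "x$a = x$b" for a b
  proof -
    obtain n where "mpow Q n $ a $ b > 0" using irr unfolding irreducible_mat_def by blast
    then show ?thesis using path_const[of "\<lambda>i. x$i", OF edge] by blast
  qed
  have "s = N * x$a" for a
  proof -
    have "s = (\<Sum>j\<in>(UNIV::'e set). x$a)" unfolding s_def by (metis (no_types) const sum.cong)
    then show ?thesis by (simp add: N_def)
  qed
  then show ?thesis using s0 Np by (simp add: vec_eq_iff)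
qed

end

locale qsi = qs Q for Q :: "real^'e^'e" + assumes irr: "irreducible_mat Q"
begin

abbreviation "Z \<equiv> matrix_inv (Pm Q + Jr)"

lemma invPJ: "invertible (Pm Q + Jr)"
proof -
  have "\<exists>B. B ** (Pm Q + Jr) = mat 1"
    using ker[OF irr] by (subst matrix_left_invertible_ker) blast
  then show ?thesis using invertible_left_inverse by blast
qed

lemma Z1: "(Pm Q + Jr) ** Z = mat 1" and Z2: "Z ** (Pm Q + Jr) = mat 1"
  using inv_props[OF invPJ] by auto

lemma JZ: "Jr ** Z = Jr"
proof -
  have "Jr ** (Pm Q + Jr) = Jr" by (simp add: matrix_add_ldistrib JP JJ)
  then have "Jr ** Z = Jr ** ((Pm Q + Jr) ** Z)" by (simp add: matrix_mul_assoc)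
  then show ?thesis by (simp add: Z1)
qed

lemma ZJ: "Z ** Jr = Jr"
proof -
  have "(Pm Q + Jr) ** Jr = Jr" by (simp add: matrix_add_rdistrib PJ JJ)
  then have "Z ** Jr = Z ** ((Pm Q + Jr) ** Jr)" by simp
  also have "\<dots> = (Z ** (Pm Q + Jr)) ** Jr" by (simp add: matrix_mul_assoc)
  finally show ?thesis by (simp add: Z2)
qed

lemma ZT: "transpose Z = Z"
proof -
  have "transpose Z ** (Pm Q + Jr) = mat 1"
    using arg_cong[OF Z1, of transpose]
    by (simp add: matrix_transpose_mul transpose_add PT JT)
  note h = this
  have "transpose Z = transpose Z ** ((Pm Q + Jr) ** Z)" by (simp add: Z1)
  also have "\<dots> = (transpose Z ** (Pm Q + Jr)) ** Z" by (simp add: matrix_mul_assoc)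
  finally show ?thesis by (simp add: h)
qed

lemma ZQ: "Z ** Q = Q ** Z"
proof -
  have c: "(Pm Q + Jr) ** Q = Q ** (Pm Q + Jr)"
    by (simp add: matrix_add_ldistrib matrix_add_rdistrib PQ QJ JQ)
  have "Z ** Q = Z ** Q ** ((Pm Q + Jr) ** Z)" by (simp add: Z1)
  also have "\<dots> = Z ** (Q ** (Pm Q + Jr)) ** Z" by (simp add: matrix_mul_assoc)
  also have "\<dots> = (Z ** (Pm Q + Jr)) ** Q ** Z" by (metis c matrix_mul_assoc)
  finally show ?thesis by (simp add: Z2)
qed

lemma comm_P: "A ** Q = Q ** A \<Longrightarrow> A ** Pm Q = Pm Q ** A"
  by (simp add: Pm_def matrix_sub_ldistrib matrix_sub_rdistrib matrix_scalar_ac scaleR_diff_right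
      flip: scalar_matrix_assoc)

lemma Ys_inv: "transpose (Ys Q n) = Ys Q n \<and> Ys Q n ** Q = Q ** Ys Q n"
proof (induction n)
  case 0
  show ?case by (simp add: transpose_diff JT ZT matrix_sub_ldistrib matrix_sub_rdistrib JQ QJ ZQ)
next
  case (Suc n)
  let ?Y = "Ys Q n"
  have s: "transpose ?Y = ?Y" and c: "?Y ** Q = Q ** ?Y" using Suc by auto
  have cp: "?Y ** Pm Q = Pm Q ** ?Y" using comm_P[OF c] .
  have tp: "transpose (Pm Q ** ?Y) = Pm Q ** ?Y"
    by (simp add: matrix_transpose_mul s PT cp)
  have cq: "(Pm Q ** ?Y) ** Q = Q ** (Pm Q ** ?Y)"
    by (metis PQ c matrix_mul_assoc)
  show ?case
    by (simp add: transpose_add transpose_diff transpose_scaleR s tp matrix_add_rdistrib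
        matrix_add_ldistrib matrix_sub_ldistrib matrix_sub_rdistrib c cq matrix_scalar_ac
        flip: scalar_matrix_assoc)
qed

lemma Lr_pow: "(Lr Q ^^ n) Jr = mat 1 + Pm Q ** Ys Q n"
proof (induction n)
  case 0
  have "Pm Q ** Z = mat 1 - Jr ** Z"
    using Z1 by (simp add: matrix_add_rdistrib algebra_simps)
  then show ?case by (simp add: matrix_sub_ldistrib PJ JZ)
next
  case (Suc n)
  let ?Y = "Ys Q n"
  have c: "?Y ** Q = Q ** ?Y" using Ys_inv by auto
  have cq: "(Pm Q ** ?Y) ** Q = Q ** (Pm Q ** ?Y)"
    by (metis PQ c matrix_mul_assoc)
  show ?case
    by (simp add: Suc Lr_step[OF cq] matrix_add_ldistrib matrix_sub_ldistrib matrix_scalar_ac)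
qed

end


lemma wjensen:
  fixes q y :: "'k \<Rightarrow> real"
  assumes "\<And>k. q k \<ge> 0"
  shows "(\<Sum>k\<in>I. q k * y k)^2 \<le> (\<Sum>k\<in>I. q k) * (\<Sum>k\<in>I. q k * (y k)^2)"
proof -
  have "(\<Sum>k\<in>I. sqrt (q k) * (sqrt (q k) * y k))^2
      \<le> (\<Sum>k\<in>I. (sqrt (q k))^2) * (\<Sum>k\<in>I. (sqrt (q k) * y k)^2)"
    by (rule Cauchy_Schwarz_ineq_sum)
  moreover have "sqrt (q k) * (sqrt (q k) * y k) = q k * y k" for k
    using assms[of k] by (simp flip: mult.assoc)
  moreover have "(sqrt (q k))^2 = q k" for k using assms[of k] by simp
  moreover have "(sqrt (q k) * y k)^2 = q k * (y k)^2" for k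
    using assms[of k] by (simp add: power_mult_distrib)
  ultimately show ?thesis by simp
qed

lemma trace_sq:
  assumes "transpose X = X"
  shows "trace (X ** X) = (\<Sum>i\<in>UNIV. \<Sum>j\<in>UNIV. (X$i$j)^2)"
proof -
  have s: "X$j$i = X$i$j" for i j using arg_cong[OF assms, of "\<lambda>A. A$i$j"]
    by (simp add: transpose_def)
  show ?thesis by (simp add: trace_def matrix_matrix_mult_def s power2_eq_square)
qed

lemma trace_sq_nonneg: "transpose X = X \<Longrightarrow> trace (X ** X) \<ge> (0::real)"
  by (simp add: trace_sq sum_nonneg)

lemma trace_AAT: "trace (A ** transpose A) = (\<Sum>i\<in>UNIV. \<Sum>j\<in>UNIV. (A$i$j)^2)"
  by (simp add: trace_def matrix_matrix_mult_def transpose_def power2_eq_square)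

context qs begin

lemma trQXX:
  fixes X :: "real^'e^'e"
  assumes "transpose X = X"
  shows "- trace (X ** X) \<le> trace (Q ** (X ** X))"
proof -
  have s: "X$j$i = X$i$j" for i j using arg_cong[OF assms, of "\<lambda>A. A$i$j"]
    by (simp add: transpose_def)
  have t1: "trace (Q ** (X ** X)) = (\<Sum>i\<in>UNIV. \<Sum>j\<in>UNIV. \<Sum>k\<in>UNIV. Q$i$j * (X$i$k * X$j$k))"
    unfolding trace_def matrix_matrix_mult_def
    by (simp add: sum_distrib_left) (intro sum.cong refl, simp add: s mult_ac)
  have "0 \<le> (\<Sum>i\<in>UNIV. \<Sum>j\<in>UNIV. \<Sum>k\<in>UNIV. Q$i$j * (X$i$k + X$j$k)^2)"
    by (intro sum_nonneg mult_nonneg_nonneg nonneg) auto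
  also have "\<dots> = (\<Sum>i\<in>UNIV. \<Sum>j\<in>UNIV. \<Sum>k\<in>UNIV. Q$i$j * (X$i$k)^2)
     + 2 * (\<Sum>i\<in>UNIV. \<Sum>j\<in>UNIV. \<Sum>k\<in>UNIV. Q$i$j * (X$i$k * X$j$k))
     + (\<Sum>i\<in>UNIV. \<Sum>j\<in>UNIV. \<Sum>k\<in>UNIV. Q$i$j * (X$j$k)^2)"
    by (simp add: power2_sum distrib_left sum.distrib sum_distrib_left mult_ac)
  also have "(\<Sum>i\<in>UNIV. \<Sum>j\<in>UNIV. \<Sum>k\<in>UNIV. Q$i$j * (X$i$k)^2) = (\<Sum>i\<in>UNIV. \<Sum>k\<in>UNIV. (X$i$k)^2)"
  proof (rule sum.cong[OF refl])
    fix i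
    have "(\<Sum>j\<in>UNIV. \<Sum>k\<in>UNIV. Q$i$j * (X$i$k)^2) = (\<Sum>k\<in>UNIV. \<Sum>j\<in>UNIV. Q$i$j * (X$i$k)^2)"
      by (rule sum.swap)
    also have "\<dots> = (\<Sum>k\<in>UNIV. (\<Sum>j\<in>UNIV. Q$i$j) * (X$i$k)^2)"
      by (simp only: sum_distrib_right)
    finally show "(\<Sum>j\<in>UNIV. \<Sum>k\<in>UNIV. Q$i$j * (X$i$k)^2) = (\<Sum>k\<in>UNIV. (X$i$k)^2)"
      by (simp add: rows)
  qed
  also have "(\<Sum>i\<in>UNIV. \<Sum>j\<in>UNIV. \<Sum>k\<in>UNIV. Q$i$j * (X$j$k)^2) = (\<Sum>j\<in>UNIV. \<Sum>k\<in>UNIV. (X$j$k)^2)"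
  proof -
    have "(\<Sum>i\<in>UNIV. \<Sum>j\<in>UNIV. \<Sum>k\<in>UNIV. Q$i$j * (X$j$k)^2) = (\<Sum>j\<in>UNIV. \<Sum>i\<in>UNIV. \<Sum>k\<in>UNIV. Q$i$j * (X$j$k)^2)"
      by (rule sum.swap)
    also have "\<dots> = (\<Sum>j\<in>UNIV. \<Sum>k\<in>UNIV. \<Sum>i\<in>UNIV. Q$i$j * (X$j$k)^2)"
      by (rule sum.cong[OF refl], rule sum.swap)
    also have "\<dots> = (\<Sum>j\<in>UNIV. \<Sum>k\<in>UNIV. (\<Sum>i\<in>UNIV. Q$i$j) * (X$j$k)^2)"
      by (simp only: sum_distrib_right)
    finally show ?thesis by (simp add: cols)
  qed
  finally show ?thesis using t1 trace_sq[OF assms] by simp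
qed

lemma trPM: "trace (Pm Q ** (M::real^'e^'e)) = (2 / real CARD('e)) * (trace M - trace (Q ** M))"
  by (simp add: Pm_def trace_scaleR trace_sub matrix_sub_rdistrib flip: scalar_matrix_assoc)
lemma trPM_old: "trace (Pm Q ** M) = (2 / real CARD('e)) * (trace M - trace (Q ** M))"
  by (simp add: Pm_def trace_scaleR trace_sub matrix_sub_rdistrib flip: scalar_matrix_assoc)

lemma trPXX:
  fixes X :: "real^'e^'e"
  assumes "transpose X = X"
  shows "trace (Pm Q ** (X ** X)) \<le> (4 / real CARD('e)) * trace (X ** X)"
proof -
  define N where "N = real CARD('e)"
  have Np: "N > 0" using Npos N_def by simp
  have h: "0 \<le> trace (X ** X) + trace (Q ** (X ** X))" using trQXX[OF assms] by linarith
  have "(4/N) * trace (X ** X) - (2/N) * (trace (X ** X) - trace (Q ** (X ** X)))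
      = (2/N) * (trace (X ** X) + trace (Q ** (X ** X)))" by (simp add: algebra_simps)
  also have "\<dots> \<ge> 0" using h Np by simp
  finally show ?thesis by (simp add: trPM N_def)
qed

lemma CS:
  fixes E :: "real^'e^'e"
  assumes "transpose E = E"
  shows "(trace E)^2 \<le> real CARD('e) * trace (E ** E)"
proof -
  have "(trace E)^2 \<le> (\<Sum>i\<in>UNIV. (E$i$i)^2) * real CARD('e)"
    using sum_squared_le_sum_of_squares[of "\<lambda>i. E$i$i" UNIV] by (simp add: trace_def)
  also have "(\<Sum>i\<in>UNIV. (E$i$i)^2) \<le> (\<Sum>i\<in>UNIV. \<Sum>j\<in>UNIV. (E$i$j)^2)"
    by (intro sum_mono member_le_sum) auto
  finally show ?thesis using trace_sq[OF assms] Npos by (simp add: mult.commute mult_right_mono)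
qed

lemma QQYY:
  fixes Y :: "real^'e^'e"
  assumes "transpose Y = Y"
  shows "trace (Q ** Q ** (Y ** Y)) \<le> trace (Y ** Y)"
proof -
  have "trace (Q ** Q ** (Y ** Y)) = trace (Q ** (Q ** (Y ** Y)))" by (simp add: matrix_mul_assoc)
  also have "\<dots> = trace ((Q ** (Y ** Y)) ** Q)" by (rule trace_mul_sym)
  also have "\<dots> = trace ((Q ** Y) ** transpose (Q ** Y))"
    by (simp add: matrix_transpose_mul assms QT matrix_mul_assoc)
  also have "\<dots> = (\<Sum>i\<in>UNIV. \<Sum>j\<in>UNIV. (\<Sum>k\<in>UNIV. Q$i$k * Y$k$j)^2)"
    by (subst trace_AAT) (simp add: matrix_matrix_mult_def)
  also have "\<dots> \<le> (\<Sum>i\<in>UNIV. \<Sum>j\<in>UNIV. \<Sum>k\<in>UNIV. Q$i$k * (Y$k$j)^2)"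
  proof (intro sum_mono)
    fix i j
    have "(\<Sum>k\<in>UNIV. Q$i$k * Y$k$j)^2 \<le> (\<Sum>k\<in>UNIV. Q$i$k) * (\<Sum>k\<in>UNIV. Q$i$k * (Y$k$j)^2)"
      by (rule wjensen) (rule nonneg)
    then show "(\<Sum>k\<in>UNIV. Q$i$k * Y$k$j)^2 \<le> (\<Sum>k\<in>UNIV. Q$i$k * (Y$k$j)^2)"
      using rows[of i] by simp
  qed
  also have "\<dots> = (\<Sum>k\<in>UNIV. \<Sum>j\<in>UNIV. (Y$k$j)^2)"
  proof -
    have "(\<Sum>i\<in>UNIV. \<Sum>j\<in>UNIV. \<Sum>k\<in>UNIV. Q$i$k * (Y$k$j)^2) = (\<Sum>j\<in>UNIV. \<Sum>i\<in>UNIV. \<Sum>k\<in>UNIV. Q$i$k * (Y$k$j)^2)"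
      by (rule sum.swap)
    also have "\<dots> = (\<Sum>j\<in>UNIV. \<Sum>k\<in>UNIV. \<Sum>i\<in>UNIV. Q$i$k * (Y$k$j)^2)"
      by (rule sum.cong[OF refl], rule sum.swap)
    also have "\<dots> = (\<Sum>j\<in>UNIV. \<Sum>k\<in>UNIV. (\<Sum>i\<in>UNIV. Q$i$k) * (Y$k$j)^2)"
      by (simp only: sum_distrib_right)
    also have "\<dots> = (\<Sum>j\<in>UNIV. \<Sum>k\<in>UNIV. (Y$k$j)^2)" by (simp add: cols)
    also have "\<dots> = (\<Sum>k\<in>UNIV. \<Sum>j\<in>UNIV. (Y$k$j)^2)" by (rule sum.swap)
    finally show ?thesis .
  qed
  finally show ?thesis using trace_sq[OF assms] by simp
qed

end


definition Wf :: "real^'e^'e \<Rightarrow> real^'e^'e \<Rightarrow> real" where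
  "Wf Q Y = trace (Pm Q ** (Y ** Y))"

lemma abs_le_sq: "\<bar>x::real\<bar> \<le> 1 + x^2"
proof -
  have "0 \<le> (\<bar>x\<bar> - 1)^2" by simp
  then have "0 \<le> x^2 - 2 * \<bar>x\<bar> + 1" by (simp add: power2_eq_square algebra_simps)
  then show ?thesis by (smt (verit) zero_le_power2)
qed

context qs begin

lemma comm_P': "A ** Q = Q ** A \<Longrightarrow> A ** Pm Q = Pm Q ** A"
  by (simp add: Pm_def matrix_sub_ldistrib matrix_sub_rdistrib matrix_scalar_ac scaleR_diff_right
      flip: scalar_matrix_assoc)

lemma W_step:
  fixes Y :: "real^'e^'e"
  assumes s: "transpose Y = Y" and c: "Y ** Q = Q ** Y"
  shows "Wf Q (Y - Pm Q ** Y + (trace (Pm Q ** Y) / real CARD('e)) *\<^sub>R mat 1) \<le> Wf Q Y"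
proof -
  define P where "P = Pm Q"
  define N where "N = real CARD('e)"
  have Np: "N > 2" using card N_def by simp
  have cp: "Y ** P = P ** Y" unfolding P_def using comm_P'[OF c] .
  define E where "E = P ** Y"
  define t where "t = trace E"
  define m where "m = t / N"
  define X where "X = E - m *\<^sub>R mat 1"
  have Y': "Y - Pm Q ** Y + (trace (Pm Q ** Y) / real CARD('e)) *\<^sub>R mat 1 = Y - X"
    by (simp add: X_def E_def m_def t_def P_def N_def)
  have Ets: "transpose E = E" by (simp add: E_def matrix_transpose_mul s P_def PT cp[unfolded P_def])
  have Xts: "transpose X = X" by (simp add: X_def transpose_diff transpose_scaleR Ets)
  have YY: "(Y - X) ** (Y - X) = Y ** Y - Y ** X - X ** Y + X ** X"
    by (simp add: matrix_sub_ldistrib matrix_sub_rdistrib algebra_simps)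
  have EE1: "P ** (Y ** E) = E ** E" by (simp add: E_def matrix_mul_assoc)
  have EE2: "P ** (E ** Y) = E ** E"
  proof -
    have "E ** E = P ** (Y ** P) ** Y" by (simp add: E_def matrix_mul_assoc)
    also have "\<dots> = P ** (P ** Y) ** Y" by (simp add: cp)
    finally show ?thesis by (simp add: E_def matrix_mul_assoc)
  qed
  have tr1: "trace (P ** (Y ** X)) = trace (E ** E) - m * t"
  proof -
    have "Y ** X = Y ** E - m *\<^sub>R Y" by (simp add: X_def matrix_sub_ldistrib matrix_scalar_ac)
    then have "P ** (Y ** X) = P ** (Y ** E) - m *\<^sub>R E"
      by (simp add: matrix_sub_ldistrib matrix_scalar_ac E_def flip: scalar_matrix_assoc)
    then have "P ** (Y ** X) = E ** E - m *\<^sub>R E" by (simp add: EE1)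
    then show ?thesis by (simp add: trace_sub trace_scaleR t_def)
  qed
  have tr2: "trace (P ** (X ** Y)) = trace (E ** E) - m * t"
  proof -
    have "X ** Y = E ** Y - m *\<^sub>R Y" by (simp add: X_def matrix_sub_rdistrib flip: scalar_matrix_assoc)
    then have "P ** (X ** Y) = P ** (E ** Y) - m *\<^sub>R E"
      by (simp add: matrix_sub_ldistrib matrix_scalar_ac E_def flip: scalar_matrix_assoc)
    then have "P ** (X ** Y) = E ** E - m *\<^sub>R E" by (simp add: EE2)
    then show ?thesis by (simp add: trace_sub trace_scaleR t_def)
  qed
  have W': "Wf Q (Y - X) = Wf Q Y - 2 * (trace (E ** E) - m * t) + trace (P ** (X ** X))"
    unfolding Wf_def YY P_def[symmetric]
    by (simp add: matrix_add_ldistrib matrix_sub_ldistrib trace_add trace_sub tr1 tr2)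
  have h1: "trace (P ** (X ** X)) \<le> (4 / N) * trace (X ** X)"
    unfolding P_def N_def by (rule trPXX[OF Xts])
  have h2: "trace (X ** X) = trace (E ** E) - 2 * m * t + m^2 * N"
    by (simp add: X_def matrix_sub_ldistrib matrix_sub_rdistrib matrix_scalar_ac
          trace_sub trace_add trace_scaleR trace_I t_def N_def power2_eq_square
          flip: scalar_matrix_assoc)
       (simp add: algebra_simps)
  have h3: "t^2 \<le> N * trace (E ** E)" unfolding t_def N_def by (rule CS[OF Ets])
  define e where "e = trace (E ** E)"
  have key: "- 2 * (e - m * t) + (4 / N) * (e - 2 * m * t + m^2 * N)
      = - (2 * (N - 2) / N^2) * (N * e - t^2)"
    using Np by (simp add: m_def field_simps power2_eq_square)
  have "- (2 * (N - 2) / N^2) * (N * e - t^2) \<le> 0"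
    using Np h3 by (intro mult_nonpos_nonneg) (auto simp: e_def)
  moreover have "4/N * trace (X ** X) = 4/N * (e - 2 * m * t + m^2 * N)" using h2 e_def by simp
  ultimately have "- 2 * (e - m * t) + trace (P ** (X ** X)) \<le> 0"
    using h1 key by linarith
  then show ?thesis unfolding Y' using W' e_def by (smt (verit))
qed

lemma E_bound:
  fixes Y :: "real^'e^'e"
  assumes s: "transpose Y = Y" and c: "Y ** Q = Q ** Y"
  shows "trace ((Pm Q ** Y) ** (Pm Q ** Y)) \<le> (4 / real CARD('e)) * Wf Q Y"
proof -
  define P where "P = Pm Q"
  define N where "N = real CARD('e)"
  have Np: "N > 0" using Npos N_def by simp
  have cp: "Y ** P = P ** Y" unfolding P_def using comm_P'[OF c] .
  define M where "M = Y ** Y"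
  have e: "(P ** Y) ** (P ** Y) = P ** (P ** M)"
  proof -
    have "(P ** Y) ** (P ** Y) = P ** (Y ** P) ** Y" by (simp add: matrix_mul_assoc)
    also have "\<dots> = P ** (P ** Y) ** Y" by (simp add: cp)
    finally show ?thesis by (simp add: M_def matrix_mul_assoc)
  qed
  have qp: "Q ** (P ** M) = P ** (Q ** M)" by (simp add: P_def matrix_mul_assoc PQ)
  define a where "a = trace M"
  define b where "b = trace (Q ** M)"
  define cc where "cc = trace (Q ** (Q ** M))"
  have "cc \<le> a" using QQYY[OF s] by (simp add: cc_def a_def M_def matrix_mul_assoc)
  have t1: "trace (P ** M) = (2/N) * (a - b)" by (simp add: P_def N_def trPM a_def b_def)
  have t2: "trace (P ** (Q ** M)) = (2/N) * (b - cc)" by (simp add: P_def N_def trPM b_def cc_def)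
  have t3: "trace (P ** (P ** M)) = (2/N) * (trace (P ** M) - trace (P ** (Q ** M)))"
    by (simp add: P_def N_def trPM flip: qp[unfolded P_def])
  have "(4/N) * trace (P ** M) - trace (P ** (P ** M)) = (4 / N^2) * (a - cc)"
    using Np by (simp add: t1 t2 t3 field_simps power2_eq_square)
  also have "\<dots> \<ge> 0" using \<open>cc \<le> a\<close> Np by simp
  finally have f: "trace (P ** (P ** M)) \<le> (4/N) * trace (P ** M)" by simp
  have "trace ((P ** Y) ** (P ** Y)) \<le> (4/N) * trace (P ** M)" using f e by simp
  then show ?thesis by (simp add: Wf_def P_def N_def M_def)
qed

end

context qsi begin

lemma W_mono: "Wf Q (Ys Q n) \<le> Wf Q (Ys Q 0)"
proof (induction n)
  case (Suc n)
  have "Wf Q (Ys Q (Suc n)) \<le> Wf Q (Ys Q n)"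
    using W_step Ys_inv[of n] by simp
  then show ?case using Suc by linarith
qed simp

lemma entry_bound:
  "\<bar>(Lr Q ^^ n) Jr $ i $ j\<bar> \<le> 2 + (4 / real CARD('e)) * Wf Q (Ys Q 0)"
proof -
  let ?Y = "Ys Q n"
  define E where "E = Pm Q ** ?Y"
  have s: "transpose ?Y = ?Y" and c: "?Y ** Q = Q ** ?Y" using Ys_inv by auto
  have Ets: "transpose E = E"
    by (simp add: E_def matrix_transpose_mul s PT comm_P'[OF c])
  have "(E$i$j)^2 \<le> (\<Sum>j\<in>UNIV. (E$i$j)^2)" by (intro member_le_sum) auto
  also have "\<dots> \<le> (\<Sum>i\<in>UNIV. \<Sum>j\<in>UNIV. (E$i$j)^2)"
    by (intro member_le_sum[of i UNIV "\<lambda>i. \<Sum>j\<in>UNIV. (E$i$j)^2"] sum_nonneg) auto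
  also have "\<dots> = trace (E ** E)" using trace_sq[OF Ets] by simp
  also have "\<dots> \<le> (4 / real CARD('e)) * Wf Q ?Y" using E_bound[OF s c] by (simp add: E_def)
  also have "\<dots> \<le> (4 / real CARD('e)) * Wf Q (Ys Q 0)"
    using W_mono[of n] Npos by (intro mult_left_mono) auto
  finally have b: "(E$i$j)^2 \<le> (4 / real CARD('e)) * Wf Q (Ys Q 0)" .
  have "\<bar>mat 1 $ i $ j :: real\<bar> \<le> 1" by (simp add: mat_def)
  moreover have "\<bar>E$i$j\<bar> \<le> 1 + (E$i$j)^2" by (rule abs_le_sq)
  ultimately show ?thesis using b by (simp add: Lr_pow E_def[symmetric])
qed

end


lemma scaleR_msc: "c *\<^sub>R (A::complex^'n^'n) = complex_of_real c *m A"
  unfolding vec_eq_iff by (simp add: msc_def) (simp add: scaleR_conv_of_real)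

lemma L0_add: "L0 Q (A + B) = L0 Q A + L0 Q B"
  by (simp add: L0_def Let_def vec_eq_iff matrix_add_ldistrib matrix_add_rdistrib trace_add
      algebra_simps) (simp add: field_simps)

lemma L0_msc: "L0 Q (c *m A) = c *m L0 Q A"
  by (simp add: L0_def Let_def vec_eq_iff msc_mult_left msc_mult_right trace_msc algebra_simps)

lemma L0_linear: "linear (L0 Q)"
  by (rule linearI) (simp_all add: L0_add scaleR_msc L0_msc)

lemma L0_bl: "bounded_linear (L0 Q)"
  using L0_linear linear_conv_bounded_linear by blast

lemma L0_cmat: "L0 Q (cmat C) = cmat (Lr Q C)"
  by (simp add: L0_def Lr_def Let_def vec_eq_iff flip: cmat_mult)
     (simp add: trace_cmat field_simps mat_def)

lemma cmat_Jr: "cmat Jr = Jmat"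
  by (simp add: vec_eq_iff Jr_def Jmat_def)

lemma L0_pow: "(L0 Q ^^ n) Jmat = cmat ((Lr Q ^^ n) Jr)"
  by (induction n) (simp_all add: cmat_Jr L0_cmat)

lemma l1norm_msc: "l1norm (c *m A) = cmod c * l1norm A"
  by (simp add: l1norm_def norm_mult sum_distrib_left)

lemma l1norm_nonneg: "l1norm A \<ge> 0"
  by (simp add: l1norm_def sum_nonneg)

lemma norm_le_l1norm: "norm A \<le> l1norm A"
proof -
  have "norm A \<le> (\<Sum>i\<in>UNIV. norm (A$i))"
    unfolding norm_vec_def by (rule L2_set_le_sum) simp
  also have "\<dots> \<le> (\<Sum>i\<in>UNIV. \<Sum>j\<in>UNIV. norm (A$i$j))"
    by (intro sum_mono) (simp add: norm_vec_def L2_set_le_sum)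
  finally show ?thesis by (simp add: l1norm_def)
qed



lemma alg1:
  fixes g j q d qg tg z N :: complex
  assumes N: "N \<noteq> 0" and z: "1 - z \<noteq> 0"
    and eq: "g + j/(1-z) - j = z * ((1/(1-z)) * (j + (2/N^2) * (d - q)) + ((N-2)/N) * g + (2/N) * qg + (2*tg/N^2) * (d - q))"
  shows "N * g - z * (N - 2) * g - 2 * z * qg = (2 * z * (1/(1-z) + tg) / N) * (d - q)"
proof -
  have z': "1 - z \<noteq> 0" using z .
  define X where "X = (2/N^2) * (d - q)"
  define Y where "Y = ((N-2)/N) * g + (2/N) * qg + (2*tg/N^2) * (d - q)"
  have e2: "z * ((1/(1-z)) * (j + X) + Y) = z * ((1/(1-z)) * j) + z * ((1/(1-z)) * X + Y)"
    by (simp add: algebra_simps add_divide_distrib)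
  have h: "j/(1-z) - j = z * ((1/(1-z)) * j)" using z by (simp add: field_simps)
  have "g + (j/(1-z) - j) = z * ((1/(1-z)) * (j + X) + Y)" using eq unfolding X_def Y_def by (simp add: algebra_simps)
  then have "g = z * ((1/(1-z)) * X + Y)" using e2 h by simp
  then have "g = z * ((1/(1-z)) * ((2/N^2) * (d - q)) + ((N-2)/N) * g + (2/N) * qg + (2*tg/N^2) * (d - q))"
    unfolding X_def Y_def by (simp add: algebra_simps)
  then have "N * g = N * (z * ((1/(1-z)) * ((2/N^2) * (d - q)) + ((N-2)/N) * g + (2/N) * qg + (2*tg/N^2) * (d - q)))"
    by simp
  also have "\<dots> = z * (N - 2) * g + 2 * z * qg + (2 * z * (1/(1-z) + tg) / N) * (d - q)"
    using N z by (simp add: field_simps power2_eq_square)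
  finally show ?thesis by (simp add: algebra_simps)
qed

context qs begin

abbreviation "Qc \<equiv> cmat Q"

lemma JQc: "Jmat ** Qc = Jmat" and QcJ: "Qc ** Jmat = Jmat"
  by (simp_all flip: cmat_Jr cmat_mult add: JQ QJ)

lemma trJ: "trace (Jmat :: complex^'e^'e) = 1"
proof -
  have "trace (Jr :: real^'e^'e) = 1" using Npos by (simp add: trace_def Jr_def)
  then show ?thesis by (simp flip: cmat_Jr add: trace_cmat)
qed

lemma L0J: "L0 Q Jmat = Jmat + (2 / of_nat CARD('e)^2) *m (mat 1 - Qc)"
  using Npos by (simp add: L0_def Let_def JQc QcJ trJ vec_eq_iff field_simps power2_eq_square)

lemma L0G:
  assumes "G ** Qc = Qc ** G"
  shows "L0 Q G = ((of_nat CARD('e) - 2) / of_nat CARD('e)) *m G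
     + (2 / of_nat CARD('e)) *m (Qc ** G) + (2 * trace G / of_nat CARD('e)^2) *m (mat 1 - Qc)"
  using Npos by (simp add: L0_def Let_def assms vec_eq_iff field_simps)

end


context qs begin

lemma Wm_ker:
  fixes z :: complex and x :: "complex^'e"
  assumes z: "cmod z < 1"
    and x: "(of_nat CARD('e) *m mat 1 - z *m ((of_nat CARD('e) - 2) *m mat 1 + 2 *m Qc)) *v x = 0"
  shows "x = 0"
proof -
  define N where "N = real CARD('e)"
  have N2: "N > 2" using card N_def by simp
  have Nc: "(of_nat CARD('e) :: complex) = complex_of_real N" by (simp add: N_def)
  define h where "h i = (\<Sum>j\<in>UNIV. complex_of_real (Q$i$j) * x$j)" for i
  define W where "W = (of_nat CARD('e) *m mat 1 - z *m ((of_nat CARD('e) - 2) *m mat 1 + 2 *m Qc) :: complex^'e^'e)"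
  have Went: "W$i$j = (complex_of_real N - z * complex_of_real (N - 2)) * (if i = j then 1 else 0) - (2 * z) * complex_of_real (Q$i$j)" for i j
  proof -
    have "W$i$j = of_nat CARD('e) * mat 1 $ i $ j - z * ((of_nat CARD('e) - 2) * mat 1 $ i $ j + 2 * complex_of_real (Q$i$j))"
      by (simp add: W_def)
    also have "mat 1 $ i $ j = (if i = j then 1 else (0::complex))" by (simp add: mat_def)
    also have "(of_nat CARD('e) :: complex) = complex_of_real N" by (rule Nc)
    also have "complex_of_real N - 2 = complex_of_real (N - 2)" by simp
    finally show ?thesis by algebra
  qed
  have eqi: "complex_of_real N * x$i = z * (complex_of_real (N - 2) * x$i + 2 * h i)" for i
  proof -
    have "(W *v x)$i = 0" using x W_def by simp
    then have "(\<Sum>j\<in>UNIV. W$i$j * x$j) = 0" by (simp add: matrix_vector_mult_def)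
    also have "(\<Sum>j\<in>UNIV. W$i$j * x$j) = (complex_of_real N - z * complex_of_real (N - 2)) * (\<Sum>j\<in>UNIV. (if i = j then 1 else 0) * x$j) - (2 * z) * h i"
      by (simp only: Went left_diff_distrib mult.assoc sum_subtractf sum_distrib_left h_def)
    also have "(\<Sum>j\<in>UNIV. (if i = j then 1 else 0) * x$j) = x$i"
      by (simp add: if_distrib[of "\<lambda>y. y * x$j" for j] cong: if_cong)
    finally show ?thesis by (simp add: algebra_simps)
  qed
  have "Max (range (\<lambda>j. cmod (x$j))) \<in> range (\<lambda>j. cmod (x$j))" by (rule Max_in) auto
  then obtain i where i: "cmod (x$i) = Max (range (\<lambda>j. cmod (x$j)))" by (metis rangeE)
  have mx: "cmod (x$j) \<le> cmod (x$i)" for j unfolding i by (rule Max_ge) auto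
  have c2: "cmod (complex_of_real N - 2) = N - 2"
  proof -
    have "complex_of_real N - 2 = complex_of_real (N - 2)" by simp
    then have "cmod (complex_of_real N - 2) = \<bar>N - 2\<bar>" by (simp only: norm_of_real)
    then show ?thesis using N2 by simp
  qed
  have hb: "cmod (h i) \<le> cmod (x$i)"
  proof -
    have "cmod (h i) \<le> (\<Sum>j\<in>UNIV. cmod (complex_of_real (Q$i$j) * x$j))"
      unfolding h_def by (rule norm_sum)
    also have "\<dots> = (\<Sum>j\<in>UNIV. Q$i$j * cmod (x$j))" by (simp add: norm_mult nonneg)
    also have "\<dots> \<le> (\<Sum>j\<in>UNIV. Q$i$j * cmod (x$i))"
      by (intro sum_mono mult_left_mono mx nonneg)
    also have "\<dots> = cmod (x$i)" by (simp add: rows flip: sum_distrib_right)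
    finally show ?thesis .
  qed
  have "N * cmod (x$i) = cmod z * cmod (complex_of_real (N - 2) * x$i + 2 * h i)"
    using arg_cong[OF eqi[of i], of cmod] N2 by (simp add: norm_mult)
  also have "\<dots> \<le> cmod z * ((N - 2) * cmod (x$i) + 2 * cmod (x$i))"
  proof (intro mult_left_mono)
    have "cmod (complex_of_real (N - 2) * x$i + 2 * h i) \<le> cmod (complex_of_real (N - 2) * x$i) + cmod (2 * h i)"
      by (rule norm_triangle_ineq)
    also have "\<dots> = (N - 2) * cmod (x$i) + 2 * cmod (h i)" using N2 c2 by (simp add: norm_mult)
    finally show "cmod (complex_of_real (N - 2) * x$i + 2 * h i) \<le> (N - 2) * cmod (x$i) + 2 * cmod (x$i)"
      using hb by linarith
  qed simp
  finally have "N * cmod (x$i) \<le> cmod z * (N * cmod (x$i))" by (simp add: algebra_simps)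
  then have "(1 - cmod z) * (N * cmod (x$i)) \<le> 0" by (simp add: algebra_simps)
  moreover have "0 \<le> N * cmod (x$i)" using N2 by simp
  ultimately have "N * cmod (x$i) \<le> 0" using z
    by (metis diff_gt_0_iff_gt mult_le_0_iff not_le)
  then have "cmod (x$i) = 0" using N2 by (simp add: mult_le_0_iff)
  then show ?thesis using mx by (metis norm_le_zero_iff vec_eq_iff zero_index)
qed

lemma Wm_inv:
  fixes z :: complex
  assumes z: "cmod z < 1"
  defines "W \<equiv> of_nat CARD('e) *m mat 1 - z *m ((of_nat CARD('e) - 2) *m mat 1 + 2 *m Qc)"
  shows "W ** matrix_inv W = mat 1 \<and> matrix_inv W ** W = mat 1"
proof -
  have "\<exists>B. B ** W = mat 1"
    using Wm_ker[OF z] unfolding W_def by (subst matrix_left_invertible_ker) blast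
  then have "invertible W" using invertible_left_inverse by blast
  then show ?thesis by (rule inv_props)
qed

end


lemma (in qsi) Rcomm: "(Lr Q ^^ n) Jr ** Q = Q ** (Lr Q ^^ n) Jr"
proof -
  have c: "Ys Q n ** Q = Q ** Ys Q n" using Ys_inv by auto
  have cq: "(Pm Q ** Ys Q n) ** Q = Q ** (Pm Q ** Ys Q n)"
    by (metis PQ c matrix_mul_assoc)
  show ?thesis by (simp add: Lr_pow matrix_add_ldistrib matrix_add_rdistrib cq)
qed

theorem corollary3p3:
  fixes Q :: "real^'e^'e" and \<zeta> :: complex
  assumes "CARD('e) > 8"
    and "stochastic Q" and "irreducible_mat Q"
    and "\<forall>x y. Q$x$y = Q$y$x" and "trace Q = 0"
    and "cmod \<zeta> < 1"
  shows "summable (\<lambda>n. l1norm (\<zeta>^n *m (L0 Q ^^ n) Jmat))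
    \<and> (\<lambda>n. \<zeta>^n *m (L0 Q ^^ n) Jmat) sums
      ((1 / (1 - \<zeta>)) *m Jmat
       + (let N = of_nat CARD('e) :: complex;
              M = matrix_inv (N *m mat 1 - \<zeta> *m ((N - 2) *m mat 1 + 2 *m cmat Q))
          in (2 * \<zeta> / (N * (1 - \<zeta>)^2 * trace M)) *m ((mat 1 - cmat Q) ** M)))"
proof -
  note z = assms(6)
  interpret qsi Q
    using assms unfolding stochastic_def by unfold_locales auto
  define X where "X n = (L0 Q ^^ n) Jmat" for n
  have Xc: "X n = cmat ((Lr Q ^^ n) Jr)" for n by (simp add: X_def L0_pow)
  define K where "K = 2 + (4 / real CARD('e)) * Wf Q (Ys Q 0)"
  have ent: "cmod (X n $ i $ j) \<le> K" for n i j
    using entry_bound[of n i j] by (simp add: Xc K_def)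
  define C where "C = real CARD('e) * real CARD('e) * K"
  have l1X: "l1norm (X n) \<le> C" for n
  proof -
    have "l1norm (X n) \<le> (\<Sum>i\<in>(UNIV::'e set). \<Sum>j\<in>(UNIV::'e set). K)"
      unfolding l1norm_def by (intro sum_mono ent)
    then show ?thesis by (simp add: C_def)
  qed
  define f where "f n = \<zeta>^n *m X n" for n
  have l1f: "l1norm (f n) \<le> C * cmod \<zeta> ^ n" for n
    using l1X[of n] by (simp add: f_def l1norm_msc norm_power mult.commute mult_right_mono)
  have geo: "summable (\<lambda>n. C * cmod \<zeta> ^ n)"
    using z by (intro summable_mult summable_geometric) simp
  have S1: "summable (\<lambda>n. l1norm (f n))"
    by (rule summable_comparison_test[OF _ geo]) (intro exI[of _ 0] allI impI, simp add: abs_of_nonneg l1norm_nonneg l1f)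
  have sn: "summable (\<lambda>n. norm (f n))"
    by (rule summable_comparison_test[OF _ S1]) (use norm_le_l1norm in auto)
  have sf: "summable f" using sn by (rule summable_norm_cancel)
  define S where "S = suminf f"
  have fS: "f sums S" using sf S_def summable_sums by blast
  have fsuc: "f (Suc n) = \<zeta> *m L0 Q (f n)" for n
    by (simp add: f_def X_def L0_msc msc_msc)
  have lin: "linear (\<lambda>A. \<zeta> *m L0 Q A)"
  proof (rule linearI)
    fix A B show "\<zeta> *m L0 Q (A + B) = \<zeta> *m L0 Q A + \<zeta> *m L0 Q B" by (simp add: L0_add msc_add)
  next
    fix r :: real and A
    have "\<zeta> *m L0 Q (r *\<^sub>R A) = (\<zeta> * of_real r) *m L0 Q A" by (simp add: scaleR_msc L0_msc msc_msc)
    also have "\<dots> = r *\<^sub>R (\<zeta> *m L0 Q A)" by (simp add: scaleR_msc msc_msc mult.commute)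
    finally show "\<zeta> *m L0 Q (r *\<^sub>R A) = r *\<^sub>R (\<zeta> *m L0 Q A)" .
  qed
  have bl: "bounded_linear (\<lambda>A. \<zeta> *m L0 Q A)" using lin linear_conv_bounded_linear by blast
  have "(\<lambda>n. f (Suc n)) sums (\<zeta> *m L0 Q S)"
    using bounded_linear.sums[OF bl fS] fsuc by simp
  then have fs2: "f sums (\<zeta> *m L0 Q S + f 0)" by (subst (asm) sums_Suc_iff)
  have f0: "f 0 = Jmat" by (simp add: f_def X_def)
  have eqS: "S = \<zeta> *m L0 Q S + Jmat"
    using sums_unique2[OF fS fs2] f0 by simp
  define hc where "hc A = A ** Qc - Qc ** A" for A
  have linh: "linear hc"
  proof (rule linearI)
    fix A B show "hc (A + B) = hc A + hc B"
      by (simp add: hc_def matrix_add_ldistrib matrix_add_rdistrib vec_eq_iff)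
  next
    fix r :: real and A show "hc (r *\<^sub>R A) = r *\<^sub>R hc A"
      by (simp add: hc_def scaleR_msc msc_mult_left msc_mult_right msc_diff)
  qed
  have blh: "bounded_linear hc" using linh linear_conv_bounded_linear by blast
  have h0: "hc (f n) = 0" for n
    by (simp add: hc_def f_def Xc msc_mult_left msc_mult_right Rcomm flip: cmat_mult)
  have "(\<lambda>n. hc (f n)) sums hc S" by (rule bounded_linear.sums[OF blh fS])
  then have "hc S = 0" using h0 by (simp add: sums_0 sums_unique2)
  then have SQ: "S ** Qc = Qc ** S" by (simp add: hc_def)
  define Nc where "Nc = (of_nat CARD('e) :: complex)"
  have Nc0: "Nc \<noteq> 0" by (simp add: Nc_def)
  have z1: "1 - \<zeta> \<noteq> 0" using z by auto
  define G where "G = S - (1/(1-\<zeta>)) *m Jmat"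
  have SG: "S = (1/(1-\<zeta>)) *m Jmat + G" by (simp add: G_def)
  have GQ: "G ** Qc = Qc ** G"
    by (simp add: G_def matrix_sub_rdistrib matrix_sub_ldistrib msc_mult_left msc_mult_right SQ JQc QcJ)
  have LS: "L0 Q S = (1/(1-\<zeta>)) *m L0 Q Jmat + L0 Q G" by (simp add: SG L0_add L0_msc)
  define c where "c = 1/(1-\<zeta>) + trace G"
  define Wm where "Wm = Nc *m mat 1 - \<zeta> *m ((Nc - 2) *m mat 1 + 2 *m Qc)"
  have WGe: "Wm ** G = Nc *m G - \<zeta> *m ((Nc - 2) *m G + 2 *m (Qc ** G))"
    by (simp add: Wm_def matrix_sub_rdistrib matrix_add_rdistrib msc_mult_left)
  have WG: "Wm ** G = (2 * \<zeta> * c / Nc) *m (mat 1 - Qc)"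
  proof -
    have "(Wm ** G) $ i $ j = ((2 * \<zeta> * c / Nc) *m (mat 1 - Qc)) $ i $ j" for i j
    proof -
      have e1: "S $ i $ j = \<zeta> * (L0 Q S) $ i $ j + Jmat $ i $ j"
        using arg_cong[OF eqS, of "\<lambda>A. A $ i $ j"] by simp
      have e2: "(L0 Q S) $ i $ j = (1/(1-\<zeta>)) * (Jmat $ i $ j + (2/Nc^2) * (mat 1 $ i $ j - Qc $ i $ j))
          + ((Nc-2)/Nc) * G $ i $ j + (2/Nc) * (Qc ** G) $ i $ j + (2 * trace G / Nc^2) * (mat 1 $ i $ j - Qc $ i $ j)"
        by (simp add: LS L0J L0G[OF GQ] Nc_def)
      have e3: "S $ i $ j = G $ i $ j + Jmat $ i $ j / (1-\<zeta>)" by (simp add: SG)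
      have eqij: "G $ i $ j + Jmat $ i $ j / (1-\<zeta>) - Jmat $ i $ j = \<zeta> * ((1/(1-\<zeta>)) * (Jmat $ i $ j + (2/Nc^2) * (mat 1 $ i $ j - Qc $ i $ j))
          + ((Nc-2)/Nc) * G $ i $ j + (2/Nc) * (Qc ** G) $ i $ j + (2 * trace G / Nc^2) * (mat 1 $ i $ j - Qc $ i $ j))"
        using e1 e2 e3 by simp
      have aux: "Nc * g - \<zeta> * ((Nc - 2) * g + 2 * qg) = Nc * g - \<zeta> * (Nc - 2) * g - 2 * \<zeta> * qg" for g qg :: complex
        by (simp add: algebra_simps)
      from alg1[OF Nc0 z1 eqij] show ?thesis by (simp add: WGe c_def aux)
    qed
    then show ?thesis by (simp add: vec_eq_iff)
  qed
  define M where "M = matrix_inv Wm"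
  have Mi: "Wm ** M = mat 1" "M ** Wm = mat 1"
    using Wm_inv[OF z] by (simp_all add: M_def Wm_def Nc_def)
  have GM: "G = (2 * \<zeta> * c / Nc) *m (M ** (mat 1 - Qc))"
  proof -
    have "G = (M ** Wm) ** G" by (simp add: Mi)
    also have "\<dots> = M ** (Wm ** G)" by (simp add: matrix_mul_assoc)
    finally show ?thesis by (simp add: WG msc_mult_right)
  qed
  have Wdec: "Wm = (Nc * (1 - \<zeta>)) *m mat 1 + (2 * \<zeta>) *m (mat 1 - Qc)"
    unfolding vec_eq_iff by (intro allI) (simp add: Wm_def algebra_simps)
  define T where "T = trace (M ** (mat 1 - Qc))"
  have trM: "Nc * (1 - \<zeta>) * trace M + 2 * \<zeta> * T = Nc"
  proof -
    have "M ** Wm = (Nc * (1 - \<zeta>)) *m M + (2 * \<zeta>) *m (M ** (mat 1 - Qc))"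
      by (simp add: Wdec matrix_add_ldistrib msc_mult_right)
    then have "trace (M ** Wm) = Nc * (1 - \<zeta>) * trace M + 2 * \<zeta> * T"
      by (simp add: trace_add trace_msc T_def)
    then show ?thesis using Mi by (simp add: trace_I Nc_def)
  qed
  have trG: "trace G = (2 * \<zeta> * c / Nc) * T" by (subst GM) (simp add: trace_msc T_def)
  have k: "c * (1 - \<zeta>)^2 * trace M = 1"
  proof -
    have "trace G = c * (1 - (1 - \<zeta>) * trace M)"
    proof -
      have "trace G = c * (2 * \<zeta> * T) / Nc" by (simp add: trG)
      also have "2 * \<zeta> * T = Nc * (1 - (1 - \<zeta>) * trace M)" using trM by (simp add: algebra_simps)
      finally show ?thesis using Nc0 by simp
    qed
    then have "c = 1/(1-\<zeta>) + c * (1 - (1 - \<zeta>) * trace M)" by (simp add: c_def)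
    then have "c * ((1 - \<zeta>) * trace M) = 1/(1-\<zeta>)" by (simp add: algebra_simps)
    then show ?thesis using z1 by (simp add: field_simps power2_eq_square)
  qed
  have trM0: "trace M \<noteq> 0" using k by auto
  have coef: "2 * \<zeta> * c / Nc = 2 * \<zeta> / (Nc * (1 - \<zeta>)^2 * trace M)"
  proof -
    have "c = 1 / ((1 - \<zeta>)^2 * trace M)" using k z1 trM0 by (simp add: field_simps)
    then show ?thesis by (simp add: field_simps)
  qed
  have WQ: "Wm ** Qc = Qc ** Wm"
    by (simp add: Wdec matrix_add_ldistrib matrix_add_rdistrib msc_mult_left msc_mult_right
        matrix_sub_ldistrib matrix_sub_rdistrib msc_diff)
  have MQ: "M ** Qc = Qc ** M"
  proof -
    have "M ** Qc = M ** Qc ** (Wm ** M)" by (simp add: Mi)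
    also have "\<dots> = M ** (Qc ** Wm) ** M" by (simp add: matrix_mul_assoc)
    also have "\<dots> = (M ** Wm) ** Qc ** M" by (metis WQ matrix_mul_assoc)
    finally show ?thesis by (simp add: Mi)
  qed
  have MQ2: "M ** (mat 1 - Qc) = (mat 1 - Qc) ** M"
    by (simp add: matrix_sub_ldistrib matrix_sub_rdistrib MQ)
  have Sfin: "S = (1 / (1 - \<zeta>)) *m Jmat
       + (let N = of_nat CARD('e) :: complex;
              M = matrix_inv (N *m mat 1 - \<zeta> *m ((N - 2) *m mat 1 + 2 *m cmat Q))
          in (2 * \<zeta> / (N * (1 - \<zeta>)^2 * trace M)) *m ((mat 1 - cmat Q) ** M))"
    unfolding Let_def Nc_def[symmetric] Wm_def[symmetric] M_def[symmetric]
    using SG GM coef MQ2 by simp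
  have "summable (\<lambda>n. l1norm (\<zeta>^n *m (L0 Q ^^ n) Jmat))" using S1 by (simp add: f_def X_def)
  moreover have "f = (\<lambda>n. \<zeta>^n *m (L0 Q ^^ n) Jmat)" by (simp add: fun_eq_iff f_def X_def)
  then have "(\<lambda>n. \<zeta>^n *m (L0 Q ^^ n) Jmat) sums S" using fS by simp
  ultimately show ?thesis using Sfin by simp
qed


end
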